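(* Let $\mathcal{S}=\{(k_1,\ldots,k_r): r\geq 1,\ k_1\geq 2,\ k_2,\ldots,k_r\geq 1 \text{ integers}\}$. Define a relation $\succ$ on $\mathcal{S}$ as follows: $(k_1,\ldots,k_r)\succ(m_1,\ldots,m_s)$ if either $(m_1,\ldots,m_s)$ is a proper initial segment of $(k_1,\ldots,k_r)$ (i.e. $s<r$ and $k_i=m_i$ for $1\leq i\leq s$), or there is $j\geq 0$ with $j<\min(r,s)$ such that $k_i=m_i$ for $1\leq i\leq j$ and $k_{j+1}<m_{j+1}$. Then for all $(k_1,\ldots,k_r),(m_1,\ldots,m_s)\in\mathcal{S}$, \[ (k_1,\ldots,k_r)\succ(m_1,\ldots,m_s)\iff \zeta^{\star}(k_1,\ldots,k_r)>\zeta^{\star}(m_1,\ldots,m_s). \]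
   Context: For integers $k_1\geq 2$ and $k_2,\ldots,k_r\geq 1$, $\zeta^{\star}(k_1,\ldots,k_r)=\sum_{n_1\geq n_2\geq\cdots\geq n_r\geq 1}\frac{1}{n_1^{k_1}\cdots n_r^{k_r}}$. (The paper defines $\succ$ as generated by the two rules "$(k_1,\ldots,k_r,k_{r+1})\succ(k_1,\ldots,k_r)$" and the lexicographic rule with reversed inequality; the description above is the resulting order.) *)

theory Defs
  imports "HOL-Analysis.Analysis"
begin

definition admissible :: "nat list \<Rightarrow> bool" where
  "admissible ks \<longleftrightarrow> ks \<noteq> [] \<and> hd ks \<ge> 2 \<and> (\<forall>k\<in>set ks. k \<ge> 1)"

definition star_tuples :: "nat \<Rightarrow> nat list set" where
  "star_tuples r = {ns. length ns = r \<and> (\<forall>i<r. ns ! i \<ge> 1) \<and>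
                        (\<forall>i. Suc i < r \<longrightarrow> ns ! i \<ge> ns ! Suc i)}"

definition zeta_star :: "nat list \<Rightarrow> real" where
  "zeta_star ks = (\<Sum>\<^sub>\<infinity> ns \<in> star_tuples (length ks).
                     \<Prod>i<length ks. 1 / real (ns ! i) ^ (ks ! i))"

definition succ_rel :: "nat list \<Rightarrow> nat list \<Rightarrow> bool" where
  "succ_rel ks ms \<longleftrightarrow>
     (length ms < length ks \<and> (\<forall>i<length ms. ks ! i = ms ! i)) \<or>
     (\<exists>j. j < min (length ks) (length ms) \<and> (\<forall>i<j. ks ! i = ms ! i) \<and> ks ! j < ms ! j)"

end

theory Submission
  imports Defs
begin

fun Fw :: "nat list \<Rightarrow> (nat \<Rightarrow> real) \<Rightarrow> nat \<Rightarrow> real" where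
  "Fw [] g N = g N"
| "Fw (k#ks) g N = (\<Sum>n=1..N. Fw ks g n / real n ^ k)"

lemma Fw_append: "Fw (xs @ ys) g N = Fw xs (\<lambda>n. Fw ys g n) N"
  by (induction xs arbitrary: N) auto

lemma Fw_diff: "Fw xs (\<lambda>n. g1 n - g2 n) N = Fw xs g1 N - Fw xs g2 N"
  by (induction xs arbitrary: N) (auto simp: sum_subtractf diff_divide_distrib)

lemma Fw_nonneg: "(\<And>n. n \<ge> 1 \<Longrightarrow> g n \<ge> 0) \<Longrightarrow> xs \<noteq> [] \<or> N \<ge> 1 \<Longrightarrow> 0 \<le> Fw xs g N"
proof (induction xs arbitrary: N)
  case Nil then show ?case by auto
next
  case (Cons k ks)
  show ?case unfolding Fw.simps
    by (rule sum_nonneg) (use Cons in auto)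
qed

lemma Fw_mono_g: "(\<And>n. g1 n \<le> g2 n) \<Longrightarrow> Fw xs g1 N \<le> Fw xs g2 N"
proof (induction xs arbitrary: N)
  case Nil then show ?case by auto
next
  case (Cons k ks)
  show ?case unfolding Fw.simps
    by (rule sum_mono) (use Cons in \<open>auto intro: divide_right_mono\<close>)
qed

lemma Fw_mono_N: "(\<And>n. n \<ge> 1 \<Longrightarrow> g n \<ge> 0) \<Longrightarrow> xs \<noteq> [] \<Longrightarrow> N \<le> M \<Longrightarrow> Fw xs g N \<le> Fw xs g M"
proof (cases xs)
  case (Cons k ks)
  assume g: "\<And>n. n \<ge> 1 \<Longrightarrow> g n \<ge> 0" and NM: "N \<le> M"
  show ?thesis unfolding Cons Fw.simps
    by (rule sum_mono2) (use NM Fw_nonneg[of g ks] g in auto)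
qed auto

lemma Fw_pos2: "(\<And>n. n \<ge> 1 \<Longrightarrow> g n \<ge> 0) \<Longrightarrow> g 2 > 0 \<Longrightarrow> Fw xs g 2 > 0"
proof (induction xs)
  case Nil then show ?case by auto
next
  case (Cons k ks)
  have "Fw (k#ks) g 2 = Fw ks g 1 + Fw ks g 2 / 2 ^ k"
    by (simp add: numeral_2_eq_2)
  moreover have "Fw ks g 1 \<ge> 0" using Fw_nonneg[of g ks 1] Cons.prems by auto
  moreover have "Fw ks g 2 / 2 ^ k > 0" using Cons by auto
  ultimately show ?case by linarith
qed

lemma Fw_one_ge1: "n \<ge> 1 \<Longrightarrow> Fw xs (\<lambda>_. 1) n \<ge> 1"
proof (induction xs arbitrary: n)
  case Nil then show ?case by auto
next
  case (Cons k ks)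
  have "Fw (k#ks) (\<lambda>_. 1) n = Fw ks (\<lambda>_. 1) 1 + (\<Sum>j=2..n. Fw ks (\<lambda>_. 1) j / real j ^ k)"
    using Cons.prems by (simp add: sum.atLeast_Suc_atMost numeral_2_eq_2)
  moreover have "(\<Sum>j=2..n. Fw ks (\<lambda>_. 1) j / real j ^ k) \<ge> 0"
    by (rule sum_nonneg) (use Fw_nonneg[of "\<lambda>_. 1" ks] in auto)
  ultimately show ?case using Cons.IH[of 1] by linarith
qed

lemma Fw_one_gt1: "xs \<noteq> [] \<Longrightarrow> Fw xs (\<lambda>_. 1) 2 > 1"
proof (cases xs)
  case (Cons k ks)
  have "Fw (k#ks) (\<lambda>_. 1) 2 = Fw ks (\<lambda>_. 1) 1 + Fw ks (\<lambda>_. 1) 2 / 2 ^ k"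
    by (simp add: numeral_2_eq_2)
  moreover have "Fw ks (\<lambda>_. 1) 1 \<ge> 1" "Fw ks (\<lambda>_. 1) 2 \<ge> 1" using Fw_one_ge1 by auto
  moreover have "Fw ks (\<lambda>_. 1) 2 / 2 ^ k > 0" using calculation(3) by auto
  ultimately show ?thesis unfolding Cons by linarith
qed auto

lemma Fw_one_le: "(\<forall>k\<in>set xs. k \<ge> 1) \<Longrightarrow> n \<ge> 1 \<Longrightarrow> Fw xs (\<lambda>_. 1) n \<le> real n"
proof (induction xs arbitrary: n)
  case Nil then show ?case by auto
next
  case (Cons k ks)
  have "Fw (k#ks) (\<lambda>_. 1) n \<le> (\<Sum>j=1..n. 1)"
    unfolding Fw.simps
  proof (rule sum_mono)
    fix j assume j: "j \<in> {1..n}"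
    have "Fw ks (\<lambda>_. 1) j \<le> real j" using Cons j by auto
    also have "real j \<le> real j ^ k" using Cons.prems j
      by (metis One_nat_def Suc_le_eq list.set_intros(1) of_nat_1 of_nat_le_iff of_nat_power self_le_power atLeastAtMost_iff not_less_eq_eq)
    finally show "Fw ks (\<lambda>_. 1) j / real j ^ k \<le> 1" using j by (auto simp: divide_le_eq)
  qed
  then show ?case by simp
qed

lemma tail_sq: assumes "1 \<le> j" "j \<le> N" shows "(\<Sum>n=j..N. 1 / real n ^ 2) \<le> 2 / real j - 1 / real N"
  using assms(2)
proof (induction N rule: dec_induct)
  case base
  have "1 / real j ^ 2 \<le> 1 / real j" using assms by (simp add: power2_eq_square divide_le_eq)
  then show ?case by simp
next
  case (step N)
  have N1: "real N \<ge> 1" using step assms by simp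
  have "1 / real (Suc N) ^ 2 + 1 / real (Suc N) \<le> 1 / real N"
  proof -
    have e: "1 / real (Suc N) ^ 2 + 1 / real (Suc N) = (real N + 2) / (real N + 1) ^ 2"
      by (simp add: power2_eq_square divide_simps) (simp add: algebra_simps)
    have "real N * (real N + 2) \<le> (real N + 1) ^ 2" by (simp add: power2_eq_square algebra_simps)
    then have "(real N + 2) / (real N + 1) ^ 2 \<le> 1 / real N" using N1
      by (simp add: divide_le_eq le_divide_eq mult.commute)
    then show ?thesis using e by simp
  qed
  then show ?case using step by simp
qed

lemma sum_swap_tri: fixes f :: "nat \<Rightarrow> nat \<Rightarrow> real" and N :: nat shows "(\<Sum>n=1..N. \<Sum>j=1..n. f n j) = (\<Sum>j=1..N. \<Sum>n=j..N. f n j :: real)"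
proof (induction N)
  case 0 then show ?case by simp
next
  case (Suc N)
  have "(\<Sum>j=1..Suc N. \<Sum>n=j..Suc N. f n j) = (\<Sum>j=1..N. \<Sum>n=j..Suc N. f n j) + f (Suc N) (Suc N)"
    by simp
  also have "(\<Sum>j=1..N. \<Sum>n=j..Suc N. f n j) = (\<Sum>j=1..N. (\<Sum>n=j..N. f n j) + f (Suc N) j)"
    by (rule sum.cong) auto
  also have "\<dots> = (\<Sum>j=1..N. \<Sum>n=j..N. f n j) + (\<Sum>j=1..N. f (Suc N) j)"
    by (simp add: sum.distrib)
  finally show ?case using Suc by simp
qed

lemma Fw_bound: "(\<forall>k\<in>set xs. k \<ge> 1) \<Longrightarrow> (\<Sum>n=1..N. Fw xs (\<lambda>_. 1) n / real n ^ 2) \<le> 2 ^ (length xs + 1)"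
proof (induction xs arbitrary: N)
  case Nil
  show ?case
  proof (cases "N \<ge> 1")
    case True
    have t: "(\<Sum>n=1..N. 1 / real n ^ 2) \<le> 2 - 1 / real N" using tail_sq[of 1 N] True by simp
    have "0 \<le> 1 / real N" by simp
    with t have "(\<Sum>n=1..N. 1 / real n ^ 2) \<le> 2" by linarith
    then show ?thesis by simp
  qed simp
next
  case (Cons k ks)
  let ?a = "\<lambda>j. Fw ks (\<lambda>_. 1) j / real j"
  have a0: "?a j \<ge> 0" for j using Fw_nonneg[of "\<lambda>_. 1" ks j] by (cases j) auto
  have "(\<Sum>n=1..N. Fw (k#ks) (\<lambda>_. 1) n / real n ^ 2) \<le> (\<Sum>n=1..N. (\<Sum>j=1..n. ?a j) / real n ^ 2)"
    unfolding Fw.simps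
  proof (rule sum_mono, rule divide_right_mono)
    fix n assume "n \<in> {1..N}"
    show "(\<Sum>j=1..n. Fw ks (\<lambda>_. 1) j / real j ^ k) \<le> (\<Sum>j=1..n. ?a j)"
    proof (rule sum_mono)
      fix j assume j: "j \<in> {1..n}"
      have "real j \<le> real j ^ k" using Cons.prems j
        by (metis One_nat_def Suc_le_eq list.set_intros(1) of_nat_1 of_nat_le_iff of_nat_power self_le_power atLeastAtMost_iff not_less_eq_eq)
      moreover have "Fw ks (\<lambda>_. 1) j \<ge> 0" using Fw_nonneg[of "\<lambda>_. 1" ks j] j by auto
      moreover have "real j > 0" using j by auto
      ultimately show "Fw ks (\<lambda>_. 1) j / real j ^ k \<le> ?a j"
        by (simp add: frac_le)
    qed
  qed simp
  also have "\<dots> = (\<Sum>n=1..N. \<Sum>j=1..n. ?a j / real n ^ 2)"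
    by (simp add: sum_divide_distrib)
  also have "\<dots> = (\<Sum>j=1..N. \<Sum>n=j..N. ?a j / real n ^ 2)"
    by (rule sum_swap_tri)
  also have "\<dots> \<le> (\<Sum>j=1..N. ?a j * (2 / real j))"
  proof (rule sum_mono)
    fix j assume j: "j \<in> {1..N}"
    have "(\<Sum>n=j..N. ?a j / real n ^ 2) = ?a j * (\<Sum>n=j..N. 1 / real n ^ 2)"
      by (simp add: sum_distrib_left)
    also have "\<dots> \<le> ?a j * (2 / real j)"
    proof (rule mult_left_mono)
      have "0 \<le> 1 / real N" by simp
      moreover have "(\<Sum>n=j..N. 1 / real n ^ 2) \<le> 2 / real j - 1 / real N" using tail_sq[of j N] j by simp
      ultimately show "(\<Sum>n=j..N. 1 / real n ^ 2) \<le> 2 / real j" by linarith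
    qed (rule a0)
    finally show "(\<Sum>n=j..N. ?a j / real n ^ 2) \<le> ?a j * (2 / real j)" .
  qed
  also have "\<dots> = 2 * (\<Sum>j=1..N. Fw ks (\<lambda>_. 1) j / real j ^ 2)"
    by (simp add: sum_distrib_left power2_eq_square mult.commute)
  also have "\<dots> \<le> 2 * 2 ^ (length ks + 1)"
    using Cons by auto
  finally show ?case by simp
qed

lemma Fw_bound_adm: "admissible xs \<Longrightarrow> Fw xs (\<lambda>_. 1) N \<le> 2 ^ length xs"
proof -
  assume a: "admissible xs"
  then obtain k ks where xs: "xs = k # ks" "k \<ge> 2" "\<forall>k\<in>set ks. k \<ge> 1"
    unfolding admissible_def by (cases xs) auto
  have "Fw xs (\<lambda>_. 1) N \<le> (\<Sum>n=1..N. Fw ks (\<lambda>_. 1) n / real n ^ 2)"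
    unfolding xs Fw.simps
  proof (rule sum_mono)
    fix n assume n: "n \<in> {1..N}"
    have "real n ^ 2 \<le> real n ^ k" using xs n by (intro power_increasing) auto
    moreover have "Fw ks (\<lambda>_. 1) n \<ge> 0" using Fw_nonneg[of "\<lambda>_. 1" ks n] n by auto
    ultimately show "Fw ks (\<lambda>_. 1) n / real n ^ k \<le> Fw ks (\<lambda>_. 1) n / real n ^ 2"
      using n by (intro divide_left_mono) auto
  qed
  also have "\<dots> \<le> 2 ^ (length ks + 1)" using Fw_bound xs by blast
  finally show ?thesis using xs by simp
qed

lemma Fw_lex: "a < b \<Longrightarrow> 1 \<le> a \<Longrightarrow> (\<forall>k\<in>set r2. k \<ge> 1) \<Longrightarrow>
   Fw (p @ b # r2) (\<lambda>_. 1) N \<le> Fw (p @ [a]) (\<lambda>_. 1) N"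
  unfolding Fw_append
proof (rule Fw_mono_g)
  fix n assume ab: "a < b" "1 \<le> a" and r2: "\<forall>k\<in>set r2. k \<ge> 1"
  show "Fw (b # r2) (\<lambda>_. 1) n \<le> Fw [a] (\<lambda>_. 1) n"
    unfolding Fw.simps
  proof (rule sum_mono)
    fix j assume j: "j \<in> {1..n}"
    have "Fw r2 (\<lambda>_. 1) j \<le> real j" using Fw_one_le r2 j by auto
    also have "real j = real j * real j ^ a / real j ^ a" using j by simp
    also have "real j * real j ^ a \<le> real j ^ b"
    proof -
      have "real j * real j ^ a = real j ^ Suc a" by simp
      also have "\<dots> \<le> real j ^ b" using ab j by (intro power_increasing) auto
      finally show ?thesis .
    qed
    then have "real j * real j ^ a / real j ^ a \<le> real j ^ b / real j ^ a"
      using j by (intro divide_right_mono) auto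
    finally have "Fw r2 (\<lambda>_. 1) j \<le> real j ^ b / real j ^ a" .
    then have "Fw r2 (\<lambda>_. 1) j / real j ^ b \<le> (real j ^ b / real j ^ a) / real j ^ b"
      by (rule divide_right_mono) simp
    also have "(real j ^ b / real j ^ a) / real j ^ b = 1 / real j ^ a" using j by simp
    finally show "Fw r2 (\<lambda>_. 1) j / real j ^ b \<le> 1 / real j ^ a" .
  qed
qed

definition prodw :: "nat list \<Rightarrow> nat list \<Rightarrow> real" where
  "prodw ks ns = (\<Prod>i<length ks. 1 / real (ns ! i) ^ (ks ! i))"

definition SL :: "nat \<Rightarrow> nat \<Rightarrow> nat list set" where
  "SL r N = {ns \<in> star_tuples r. \<forall>i<r. ns ! i \<le> N}"

lemma star_Cons:
  "n # ns \<in> star_tuples (Suc r) \<longleftrightarrow> n \<ge> 1 \<and> ns \<in> star_tuples r \<and> (\<forall>i<r. ns ! i \<le> n)"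
proof
  assume a: "n # ns \<in> star_tuples (Suc r)"
  then have len: "length ns = r" and pos: "\<forall>i<Suc r. (n#ns) ! i \<ge> 1"
    and ch: "\<forall>i. Suc i < Suc r \<longrightarrow> (n#ns) ! i \<ge> (n#ns) ! Suc i"
    unfolding star_tuples_def by auto
  have st: "ns \<in> star_tuples r" unfolding star_tuples_def
  proof (intro CollectI conjI allI impI)
    fix i assume "i < r" then show "ns ! i \<ge> 1" using pos[rule_format, of "Suc i"] by auto
  next
    fix i assume "Suc i < r" then show "ns ! i \<ge> ns ! Suc i" using ch[rule_format, of "Suc i"] by auto
  qed (use len in auto)
  have "ns ! i \<le> n" if "i < r" for i
    using that
  proof (induction i)
    case 0 then show ?case using ch[rule_format, of 0] by auto
  next
    case (Suc i)
    then have "ns ! Suc i \<le> ns ! i" using ch[rule_format, of "Suc i"] by auto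
    then show ?case using Suc by auto
  qed
  then show "n \<ge> 1 \<and> ns \<in> star_tuples r \<and> (\<forall>i<r. ns ! i \<le> n)"
    using st pos[rule_format, of 0] by auto
next
  assume a: "n \<ge> 1 \<and> ns \<in> star_tuples r \<and> (\<forall>i<r. ns ! i \<le> n)"
  then have len: "length ns = r" and pos: "\<forall>i<r. ns ! i \<ge> 1"
    and ch: "\<forall>i. Suc i < r \<longrightarrow> ns ! i \<ge> ns ! Suc i" and n1: "n \<ge> 1" and le: "\<forall>i<r. ns ! i \<le> n"
    unfolding star_tuples_def by auto
  show "n # ns \<in> star_tuples (Suc r)" unfolding star_tuples_def
  proof (intro CollectI conjI allI impI)
    fix i assume "i < Suc r" then show "(n#ns) ! i \<ge> 1" using pos n1 by (cases i) auto
  next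
    fix i assume "Suc i < Suc r" then show "(n#ns) ! i \<ge> (n#ns) ! Suc i" using ch le by (cases i) auto
  qed (use len in auto)
qed

lemma SL_finite: "finite (SL r N)"
proof (rule finite_subset)
  show "SL r N \<subseteq> {xs. set xs \<subseteq> {0..N} \<and> length xs = r}"
    unfolding SL_def star_tuples_def by (auto simp: in_set_conv_nth)
  show "finite {xs. set xs \<subseteq> {0..N} \<and> length xs = r}"
    by (rule finite_lists_length_eq) auto
qed

lemma SL_0: "SL 0 N = {[]}"
  unfolding SL_def star_tuples_def by auto

lemma SL_Suc: "SL (Suc r) N = (\<lambda>(n,ns). n # ns) ` (SIGMA n:{1..N}. SL r n)"
proof (intro equalityI subsetI)
  fix xs assume xs: "xs \<in> SL (Suc r) N"
  then obtain n ns where e: "xs = n # ns"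
    unfolding SL_def star_tuples_def by (cases xs) auto
  have st: "n # ns \<in> star_tuples (Suc r)" and le: "\<forall>i<Suc r. (n#ns) ! i \<le> N"
    using xs e unfolding SL_def by auto
  then have "n \<ge> 1 \<and> ns \<in> star_tuples r \<and> (\<forall>i<r. ns ! i \<le> n)" using star_Cons by blast
  moreover have "n \<le> N" using le[rule_format, of 0] by auto
  ultimately show "xs \<in> (\<lambda>(n,ns). n # ns) ` (SIGMA n:{1..N}. SL r n)"
    unfolding e SL_def by force
next
  fix xs assume "xs \<in> (\<lambda>(n,ns). n # ns) ` (SIGMA n:{1..N}. SL r n)"
  then obtain n ns where e: "xs = n # ns" and n: "n \<in> {1..N}" and ns: "ns \<in> SL r n" by auto
  then have "n # ns \<in> star_tuples (Suc r)" using star_Cons unfolding SL_def by auto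
  moreover have "\<forall>i<Suc r. (n#ns) ! i \<le> N"
  proof (intro allI impI)
    fix i assume "i < Suc r" then show "(n#ns) ! i \<le> N" using n ns unfolding SL_def by (cases i) auto
  qed
  ultimately show "xs \<in> SL (Suc r) N" unfolding e SL_def by auto
qed

lemma Fw_sum: "Fw ks (\<lambda>_. 1) N = (\<Sum>ns\<in>SL (length ks) N. prodw ks ns)"
proof (induction ks arbitrary: N)
  case Nil then show ?case by (simp add: SL_0 prodw_def)
next
  case (Cons k ks)
  have inj: "inj_on (\<lambda>(n,ns). n # ns) (SIGMA n:{1..N}. SL (length ks) n)"
    by (auto simp: inj_on_def)
  have "(\<Sum>ns\<in>SL (length (k#ks)) N. prodw (k#ks) ns)
      = (\<Sum>p\<in>(SIGMA n:{1..N}. SL (length ks) n). prodw (k#ks) (fst p # snd p))"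
    unfolding length_Cons SL_Suc by (subst sum.reindex[OF inj]) (simp add: case_prod_beta o_def)
  also have "\<dots> = (\<Sum>n\<in>{1..N}. \<Sum>ns\<in>SL (length ks) n. prodw (k#ks) (n # ns))"
    by (subst sum.Sigma) (auto simp: SL_finite case_prod_beta)
  also have "\<dots> = (\<Sum>n\<in>{1..N}. \<Sum>ns\<in>SL (length ks) n. prodw ks ns / real n ^ k)"
    unfolding prodw_def length_Cons prod.lessThan_Suc_shift by simp
  also have "\<dots> = (\<Sum>n\<in>{1..N}. Fw ks (\<lambda>_. 1) n / real n ^ k)"
    by (simp add: Cons.IH sum_divide_distrib)
  finally show ?case by simp
qed

lemma prodw_nonneg: "prodw ks ns \<ge> 0"
  unfolding prodw_def by (rule prod_nonneg) auto

lemma finite_in_SL: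
  assumes "finite F" "F \<subseteq> star_tuples r"
  shows "\<exists>M. F \<subseteq> SL r M"
proof -
  define M where "M = Max (insert 0 (\<Union>(set ` F)))"
  have fin: "finite (insert 0 (\<Union>(set ` F)))" using assms(1) by auto
  have "F \<subseteq> SL r M"
  proof
    fix ns assume ns: "ns \<in> F"
    have "\<forall>i<r. ns ! i \<le> M"
    proof (intro allI impI)
      fix i assume i: "i < r"
      have "length ns = r" using ns assms(2) unfolding star_tuples_def by auto
      then have "ns ! i \<in> set ns" using i by auto
      then have "ns ! i \<in> insert 0 (\<Union>(set ` F))" using ns by blast
      then show "ns ! i \<le> M" unfolding M_def using fin by (rule Max_ge[rotated])
    qed
    then show "ns \<in> SL r M" using ns assms(2) unfolding SL_def by auto
  qed
  then show ?thesis by blast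
qed

lemma zeta_lim:
  assumes adm: "admissible ks"
  shows "(\<lambda>N. Fw ks (\<lambda>_. 1) N) \<longlonglongrightarrow> zeta_star ks"
proof -
  let ?r = "length ks"
  let ?s = "\<lambda>N. Fw ks (\<lambda>_. 1) N"
  have ne: "ks \<noteq> []" using adm unfolding admissible_def by auto
  have bd: "?s N \<le> 2 ^ ?r" for N using Fw_bound_adm[OF adm] .
  have inc: "incseq ?s"
    by (rule incseq_SucI, rule Fw_mono_N) (use ne in auto)
  have bdd: "bdd_above (range ?s)" using bd by (intro bdd_aboveI[where M="2 ^ ?r"]) auto
  have lim: "?s \<longlonglongrightarrow> (SUP N. ?s N)" by (rule LIMSEQ_incseq_SUP[OF bdd inc])
  have fin_le: "sum (prodw ks) F \<le> (SUP N. ?s N)" if FF: "finite F" "F \<subseteq> star_tuples ?r" for F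
  proof -
    obtain M where M: "F \<subseteq> SL ?r M" using finite_in_SL[OF FF] by blast
    have "sum (prodw ks) F \<le> sum (prodw ks) (SL ?r M)"
      by (rule sum_mono2[OF SL_finite M]) (simp add: prodw_nonneg)
    also have "\<dots> = ?s M" by (simp add: Fw_sum)
    also have "\<dots> \<le> (SUP N. ?s N)" by (rule cSUP_upper[OF _ bdd]) simp
    finally show ?thesis .
  qed
  have summ: "prodw ks summable_on star_tuples ?r"
  proof (rule nonneg_bdd_above_summable_on)
    show "bdd_above (sum (prodw ks) ` {F. F \<subseteq> star_tuples ?r \<and> finite F})"
      using fin_le by (auto intro!: bdd_aboveI)
  qed (simp add: prodw_nonneg)
  have z: "zeta_star ks = infsum (prodw ks) (star_tuples ?r)"
    unfolding zeta_star_def prodw_def by simp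
  have "infsum (prodw ks) (star_tuples ?r) \<le> (SUP N. ?s N)"
    by (rule infsum_le_finite_sums[OF summ]) (use fin_le in auto)
  moreover have "(SUP N. ?s N) \<le> infsum (prodw ks) (star_tuples ?r)"
  proof (rule cSUP_least)
    fix N
    have "?s N = sum (prodw ks) (SL ?r N)" by (simp add: Fw_sum)
    also have "\<dots> \<le> infsum (prodw ks) (star_tuples ?r)"
      by (rule finite_sum_le_infsum[OF summ SL_finite]) (auto simp: SL_def prodw_nonneg)
    finally show "?s N \<le> infsum (prodw ks) (star_tuples ?r)" .
  qed simp
  ultimately have "(SUP N. ?s N) = zeta_star ks" using z by linarith
  then show ?thesis using lim by simp
qed

lemma zeta_le:
  assumes "admissible xs" "admissible ys" "\<And>N. Fw xs (\<lambda>_. 1) N \<le> Fw ys (\<lambda>_. 1) N"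
  shows "zeta_star xs \<le> zeta_star ys"
  by (rule LIMSEQ_le[OF zeta_lim[OF assms(1)] zeta_lim[OF assms(2)]]) (use assms(3) in auto)

lemma zeta_prefix_strict:
  assumes a1: "admissible xs" and a2: "admissible (xs @ ys)" and ne: "ys \<noteq> []"
  shows "zeta_star xs < zeta_star (xs @ ys)"
proof -
  let ?h = "\<lambda>n. Fw ys (\<lambda>_. 1) n - 1"
  have xne: "xs \<noteq> []" using a1 unfolding admissible_def by auto
  have h0: "?h n \<ge> 0" if "n \<ge> 1" for n using Fw_one_ge1[OF that] by simp
  have d: "Fw xs ?h 2 > 0" by (rule Fw_pos2) (use h0 Fw_one_gt1[OF ne] in auto)
  have eq: "Fw (xs @ ys) (\<lambda>_. 1) N - Fw xs (\<lambda>_. 1) N = Fw xs ?h N" for N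
    unfolding Fw_append Fw_diff by simp
  have "(\<lambda>N. Fw (xs @ ys) (\<lambda>_. 1) N - Fw xs (\<lambda>_. 1) N) \<longlonglongrightarrow> zeta_star (xs @ ys) - zeta_star xs"
    by (intro tendsto_diff zeta_lim a1 a2)
  moreover have "\<exists>N0. \<forall>N\<ge>N0. Fw xs ?h 2 \<le> Fw (xs @ ys) (\<lambda>_. 1) N - Fw xs (\<lambda>_. 1) N"
    by (rule exI[of _ 2], unfold eq, intro allI impI Fw_mono_N) (use h0 xne in auto)
  ultimately have "Fw xs ?h 2 \<le> zeta_star (xs @ ys) - zeta_star xs"
    by (rule LIMSEQ_le_const)
  with d show ?thesis by linarith
qed

lemma zeta_prefix_le:
  assumes "admissible xs" "admissible (xs @ ys)"
  shows "zeta_star xs \<le> zeta_star (xs @ ys)"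
  using zeta_prefix_strict[OF assms] by (cases "ys = []") auto

lemma succ_total:
  assumes "\<not> succ_rel ks ms" "ks \<noteq> ms"
  shows "succ_rel ms ks"
proof (cases "\<exists>j<min (length ks) (length ms). ks ! j \<noteq> ms ! j")
  case True
  define j where "j = (LEAST j. j < min (length ks) (length ms) \<and> ks ! j \<noteq> ms ! j)"
  have j: "j < min (length ks) (length ms) \<and> ks ! j \<noteq> ms ! j"
    unfolding j_def using True by (metis (mono_tags, lifting) LeastI)
  have eqs: "\<forall>i<j. ks ! i = ms ! i"
  proof (intro allI impI)
    fix i assume "i < j"
    then show "ks ! i = ms ! i" using not_less_Least[of i "\<lambda>j. j < min (length ks) (length ms) \<and> ks ! j \<noteq> ms ! j"] j
      unfolding j_def[symmetric] by auto
  qed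
  have "\<not> ks ! j < ms ! j" using assms(1) j eqs unfolding succ_rel_def by blast
  then have "ms ! j < ks ! j" using j by auto
  then show ?thesis unfolding succ_rel_def using j eqs by (metis min.commute)
next
  case False
  then have eq: "\<forall>i<min (length ks) (length ms). ks ! i = ms ! i" by auto
  consider "length ms < length ks" | "length ms = length ks" | "length ks < length ms" by linarith
  then show ?thesis
  proof cases
    case 1 then have False using assms(1) eq unfolding succ_rel_def by auto
    then show ?thesis ..
  next
    case 2 then have "ks = ms" using eq by (auto intro: nth_equalityI)
    then show ?thesis using assms(2) by simp
  next
    case 3 then show ?thesis using eq unfolding succ_rel_def by auto
  qed
qed

lemma succ_imp_less:
  assumes aks: "admissible ks" and ams: "admissible ms" and s: "succ_rel ks ms"
  shows "zeta_star ms < zeta_star ks"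
proof -
  have pos_ks: "\<forall>k\<in>set ks. k \<ge> 1" and pos_ms: "\<forall>k\<in>set ms. k \<ge> 1"
    using aks ams unfolding admissible_def by auto
  from s consider (pre) "length ms < length ks" "\<forall>i<length ms. ks ! i = ms ! i"
    | (lex) j where "j < min (length ks) (length ms)" "\<forall>i<j. ks ! i = ms ! i" "ks ! j < ms ! j"
    unfolding succ_rel_def by blast
  then show ?thesis
  proof cases
    case pre
    have "take (length ms) ks = ms" using pre by (auto intro: nth_equalityI)
    then have e: "ks = ms @ drop (length ms) ks" by (metis append_take_drop_id)
    have "drop (length ms) ks \<noteq> []" using pre by simp
    then show ?thesis using zeta_prefix_strict[OF ams] aks e by metis
  next
    case lex
    define p where "p = take j ks"
    have pm: "take j ms = p" unfolding p_def using lex by (auto intro: nth_equalityI)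
    define a where "a = ks ! j"
    define b where "b = ms ! j"
    define r1 where "r1 = drop (Suc j) ks"
    define r2 where "r2 = drop (Suc j) ms"
    have eks: "ks = p @ a # r1" unfolding p_def a_def r1_def using lex by (simp add: id_take_nth_drop)
    have ems: "ms = p @ b # r2" unfolding a_def b_def r2_def using lex pm[symmetric] by (simp add: id_take_nth_drop)
    have ab: "a < b" using lex unfolding a_def b_def by simp
    have a1: "a \<ge> 1" using pos_ks eks by auto
    have r2pos: "\<forall>k\<in>set (r2 @ [1]). k \<ge> 1" using pos_ms ems by auto
    have adm_ms1: "admissible (ms @ [1])"
      using ams unfolding admissible_def by (cases ms) auto
    have adm_pa: "admissible (p @ [a])"
    proof -
      have "hd (p @ [a]) = hd ks" unfolding eks by (cases p) auto
      moreover have "set (p @ [a]) \<subseteq> set ks" unfolding eks by auto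
      ultimately show ?thesis using aks unfolding admissible_def by auto
    qed
    have "zeta_star ms < zeta_star (ms @ [1])"
      by (rule zeta_prefix_strict[OF ams adm_ms1]) simp
    also have "zeta_star (ms @ [1]) \<le> zeta_star (p @ [a])"
    proof (rule zeta_le[OF adm_ms1 adm_pa])
      fix N
      have "ms @ [1] = p @ b # (r2 @ [1])" using ems by simp
      then show "Fw (ms @ [1]) (\<lambda>_. 1) N \<le> Fw (p @ [a]) (\<lambda>_. 1) N"
        using Fw_lex[OF ab a1 r2pos, of p N] by simp
    qed
    also have "zeta_star (p @ [a]) \<le> zeta_star ks"
      using zeta_prefix_le[OF adm_pa, of r1] aks eks by simp
    finally show ?thesis .
  qed
qed

theorem theorem1p2:
  assumes "admissible ks" and "admissible ms"
  shows "succ_rel ks ms \<longleftrightarrow> zeta_star ks > zeta_star ms"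
proof
  assume "succ_rel ks ms"
  then show "zeta_star ks > zeta_star ms" using succ_imp_less assms by blast
next
  assume l: "zeta_star ks > zeta_star ms"
  show "succ_rel ks ms"
  proof (rule ccontr)
    assume n: "\<not> succ_rel ks ms"
    have "ks \<noteq> ms" using l by auto
    then have "succ_rel ms ks" using succ_total n by blast
    then have "zeta_star ks < zeta_star ms" using succ_imp_less assms by blast
    with l show False by simp
  qed
qed

end
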